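(* Let ${x}, {x}' \in \mathbb{S}^{d-1}$ with $\|{x} - {x}'\| \leq \delta \leq 2$, where $\delta>0$, and let $\epsilon \in (0, 1)$. There exist absolute constants $C,C'>0$ such that if $d_1 \geq \frac{C}{\delta} \log \frac{1}{\epsilon}$, then with probability at least $1 - \epsilon$ over the network parameters, \[ \|\nabla_{\theta} f({x}) - \nabla_{\theta} f({x}')\| \leq C'\sqrt{\delta}. \]
   Context: Shallow ReLU network $f(x;W,v)=\frac{1}{\sqrt{d_1}}\sum_{j=1}^{d_1}v_j\sigma(w_j^Tx)$ with $\sigma(z)=\max\{0,z\}$, $W=[w_1,\dots,w_{d_1}]^T\in\mathbb{R}^{d_1\times d}$, $v\in\mathbb{R}^{d_1}$, all entries iid $\mathcal N(0,1)$, $\theta=(W,v)$. The gradient is $\nabla_{w_j}f(x)=\frac1{\sqrt{d_1}}v_j\dot\sigma(w_j^Tx)x$, $\nabla_{v_j}f(x)=\frac1{\sqrt{d_1}}\sigma(w_j^Tx)$, with $\dot\sigma(z)=1$ for $z>0$ and $0$ otherwise; its norm is the Euclidean (Frobenius) norm on $\mathbb{R}^{d_1\times d}\times\mathbb{R}^{d_1}$. *)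

theory Defs
  imports "HOL-Probability.Probability"
begin

text \<open>Vectors in R^d are represented as functions nat => real, using only indices < d.
  Network parameters theta = (W, v) are a single function on the index set
  Inl (j,k) (entry W_{jk}, j < d1, k < d) and Inr j (entry v_j, j < d1).\<close>

definition relu :: "real \<Rightarrow> real" where
  "relu z = max 0 z"

definition relu_deriv :: "real \<Rightarrow> real" where
  "relu_deriv z = (if z > 0 then 1 else 0)"

definition vnorm :: "nat \<Rightarrow> (nat \<Rightarrow> real) \<Rightarrow> real" where
  "vnorm d x = sqrt (\<Sum>k<d. (x k)\<^sup>2)"

definition on_sphere :: "nat \<Rightarrow> (nat \<Rightarrow> real) \<Rightarrow> bool" where
  "on_sphere d x \<longleftrightarrow> vnorm d x = 1"

definition param_index :: "nat \<Rightarrow> nat \<Rightarrow> ((nat \<times> nat) + nat) set" where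
  "param_index d1 d = Inl ` ({..<d1} \<times> {..<d}) \<union> Inr ` {..<d1}"

definition preact :: "nat \<Rightarrow> ((nat \<times> nat) + nat \<Rightarrow> real) \<Rightarrow> nat \<Rightarrow> (nat \<Rightarrow> real) \<Rightarrow> real" where
  "preact d \<theta> j x = (\<Sum>k<d. \<theta> (Inl (j, k)) * x k)"

definition grad_W :: "nat \<Rightarrow> nat \<Rightarrow> ((nat \<times> nat) + nat \<Rightarrow> real) \<Rightarrow> (nat \<Rightarrow> real) \<Rightarrow> nat \<Rightarrow> nat \<Rightarrow> real" where
  "grad_W d1 d \<theta> x j k = 1 / sqrt (real d1) * \<theta> (Inr j) * relu_deriv (preact d \<theta> j x) * x k"

definition grad_v :: "nat \<Rightarrow> nat \<Rightarrow> ((nat \<times> nat) + nat \<Rightarrow> real) \<Rightarrow> (nat \<Rightarrow> real) \<Rightarrow> nat \<Rightarrow> real" where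
  "grad_v d1 d \<theta> x j = 1 / sqrt (real d1) * relu (preact d \<theta> j x)"

definition grad_diff_norm :: "nat \<Rightarrow> nat \<Rightarrow> ((nat \<times> nat) + nat \<Rightarrow> real) \<Rightarrow> (nat \<Rightarrow> real) \<Rightarrow> (nat \<Rightarrow> real) \<Rightarrow> real" where
  "grad_diff_norm d1 d \<theta> x x' = sqrt (
      (\<Sum>j<d1. \<Sum>k<d. (grad_W d1 d \<theta> x j k - grad_W d1 d \<theta> x' j k)\<^sup>2)
    + (\<Sum>j<d1. (grad_v d1 d \<theta> x j - grad_v d1 d \<theta> x' j)\<^sup>2))"

definition std_gauss :: "real measure" where
  "std_gauss = density lborel std_normal_density"

definition param_measure :: "nat \<Rightarrow> nat \<Rightarrow> ((nat \<times> nat) + nat \<Rightarrow> real) measure" where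
  "param_measure d1 d = PiM (param_index d1 d) (\<lambda>_. std_gauss)"

end

theory Submission
  imports Defs
begin

lemma nn_integral_normal_density:
  assumes "0 < \<sigma>"
  shows "(\<integral>\<^sup>+ t. ennreal (normal_density m \<sigma> t) \<partial>lborel) = 1"
proof -
  interpret prob_space "density lborel (\<lambda>x. ennreal (normal_density m \<sigma> x))"
    using prob_space_normal_density[OF assms] .
  have "emeasure (density lborel (\<lambda>x. ennreal (normal_density m \<sigma> x))) UNIV = 1"
    using emeasure_space_1 by simp
  then show ?thesis
    by (simp add: emeasure_density)
qed

lemma gauss_D1:
  assumes s: "2 * s * \<sigma>\<^sup>2 < 1" and sig: "0 < \<sigma>"
  shows "(\<integral>\<^sup>+ t. ennreal (exp (s * t\<^sup>2)) \<partial>density lborel (\<lambda>x. ennreal (normal_density 0 \<sigma> x)))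
     = ennreal (1 / sqrt (1 - 2 * s * \<sigma>\<^sup>2))"
proof -
  define q where "q = 1 - 2 * s * \<sigma>\<^sup>2"
  have q: "0 < q" using s by (simp add: q_def)
  define \<tau> where "\<tau> = \<sigma> / sqrt q"
  have tau: "0 < \<tau>" using q sig by (simp add: \<tau>_def)
  have tau2: "\<tau>\<^sup>2 = \<sigma>\<^sup>2 / q" using q by (simp add: \<tau>_def power_divide)
  have pt: "exp (s * t\<^sup>2) * normal_density 0 \<sigma> t = (1 / sqrt q) * normal_density 0 \<tau> t" for t
  proof -
    have e: "s * t\<^sup>2 + (- (t - 0)\<^sup>2 / (2 * \<sigma>\<^sup>2)) = - (t - 0)\<^sup>2 / (2 * \<tau>\<^sup>2)"
    proof -
      have "s * t\<^sup>2 - t\<^sup>2 / (2 * \<sigma>\<^sup>2) = - t\<^sup>2 * q / (2 * \<sigma>\<^sup>2)"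
        using sig by (simp add: q_def field_simps)
      also have "\<dots> = - t\<^sup>2 / (2 * \<tau>\<^sup>2)" using q sig by (simp add: tau2 field_simps)
      finally show ?thesis by simp
    qed
    have c: "1 / sqrt (2 * pi * \<sigma>\<^sup>2) = (1 / sqrt q) * (1 / sqrt (2 * pi * \<tau>\<^sup>2))"
      using q sig unfolding tau2 by (simp add: real_sqrt_divide real_sqrt_mult field_simps)
    have g: "exp a * (b * exp cc) = b * exp (a + cc)" for a b cc :: real
      by (simp add: exp_add mult_ac)
    show ?thesis
      unfolding normal_density_def g e c by simp
  qed
  have "(\<integral>\<^sup>+ t. ennreal (exp (s * t\<^sup>2)) \<partial>density lborel (\<lambda>x. ennreal (normal_density 0 \<sigma> x)))
      = (\<integral>\<^sup>+ t. ennreal (normal_density 0 \<sigma> t) * ennreal (exp (s * t\<^sup>2)) \<partial>lborel)"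
    by (subst nn_integral_density) auto
  also have "\<dots> = (\<integral>\<^sup>+ t. ennreal (1 / sqrt q) * ennreal (normal_density 0 \<tau> t) \<partial>lborel)"
    unfolding ennreal_mult'[symmetric, OF normal_density_nonneg] ennreal_mult'[symmetric, OF divide_nonneg_nonneg[OF zero_le_one real_sqrt_ge_zero[OF less_imp_le[OF q]]]]
    by (intro nn_integral_cong) (metis pt mult.commute)
  also have "\<dots> = ennreal (1 / sqrt q)"
    by (subst nn_integral_cmult) (auto simp: nn_integral_normal_density[OF tau])
  finally show ?thesis by (simp add: q_def)
qed

lemma gauss_D2:
  "(\<integral>\<^sup>+ t. ennreal (exp (c * t)) \<partial>std_normal_distribution) = ennreal (exp (c\<^sup>2 / 2))"
proof -
  have pt: "exp (c * t) * normal_density 0 1 t = exp (c\<^sup>2 / 2) * normal_density c 1 t" for t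
  proof -
    have e: "c * t + (- (t - 0)\<^sup>2 / (2 * 1\<^sup>2)) = c\<^sup>2 / 2 + (- (t - c)\<^sup>2 / (2 * 1\<^sup>2))"
      by (simp add: field_simps power2_eq_square)
    show ?thesis unfolding normal_density_def
      by (simp add: exp_add[symmetric] e[simplified] mult.assoc mult.left_commute[of "exp _"])
  qed
  have "(\<integral>\<^sup>+ t. ennreal (exp (c * t)) \<partial>std_normal_distribution)
      = (\<integral>\<^sup>+ t. ennreal (normal_density 0 1 t) * ennreal (exp (c * t)) \<partial>lborel)"
    by (subst nn_integral_density) auto
  also have "\<dots> = (\<integral>\<^sup>+ t. ennreal (exp (c\<^sup>2 / 2)) * ennreal (normal_density c 1 t) \<partial>lborel)"
    unfolding ennreal_mult'[symmetric, OF normal_density_nonneg] ennreal_mult'[symmetric, OF exp_ge_zero]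
    by (intro nn_integral_cong) (metis pt mult.commute)
  also have "\<dots> = ennreal (exp (c\<^sup>2 / 2))"
    by (subst nn_integral_cmult) (auto simp: nn_integral_normal_density)
  finally show ?thesis .
qed

lemma gauss_D3:
  assumes a: "0 < \<alpha>"
  shows "(\<integral>\<^sup>+ t. ennreal (exp (- \<alpha> * t\<^sup>2)) \<partial>density lborel (\<lambda>x. ennreal (normal_density m 1 x)))
     \<le> ennreal (1 / sqrt (2 * \<alpha>))"
proof -
  define \<tau> where "\<tau> = 1 / sqrt (2 * \<alpha>)"
  have tau: "0 < \<tau>" using a by (simp add: \<tau>_def)
  have tau2: "\<tau>\<^sup>2 = 1 / (2 * \<alpha>)" using a by (simp add: \<tau>_def power_divide)
  have pt: "exp (- \<alpha> * t\<^sup>2) * normal_density m 1 t \<le> \<tau> * normal_density 0 \<tau> t" for t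
  proof -
    have "normal_density m 1 t \<le> 1 / sqrt (2 * pi)"
      unfolding normal_density_def by (simp add: divide_right_mono)
    then have "exp (- \<alpha> * t\<^sup>2) * normal_density m 1 t \<le> exp (- \<alpha> * t\<^sup>2) * (1 / sqrt (2 * pi))"
      by (intro mult_left_mono) auto
    also have "\<dots> = \<tau> * normal_density 0 \<tau> t"
    proof -
      have e: "- \<alpha> * t\<^sup>2 = - (t - 0)\<^sup>2 / (2 * \<tau>\<^sup>2)" using a unfolding tau2 by (simp add: field_simps)
      have c: "\<tau> * (1 / sqrt (2 * pi * \<tau>\<^sup>2)) = 1 / sqrt (2 * pi)"
        using tau by (simp add: real_sqrt_mult)
      show ?thesis unfolding normal_density_def e
        by (simp only: mult.assoc[symmetric] c) simp
    qed
    finally show ?thesis .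
  qed
  have "(\<integral>\<^sup>+ t. ennreal (exp (- \<alpha> * t\<^sup>2)) \<partial>density lborel (\<lambda>x. ennreal (normal_density m 1 x)))
      = (\<integral>\<^sup>+ t. ennreal (normal_density m 1 t) * ennreal (exp (- \<alpha> * t\<^sup>2)) \<partial>lborel)"
    by (subst nn_integral_density) auto
  also have "\<dots> \<le> (\<integral>\<^sup>+ t. ennreal \<tau> * ennreal (normal_density 0 \<tau> t) \<partial>lborel)"
    unfolding ennreal_mult'[symmetric, OF normal_density_nonneg] ennreal_mult'[symmetric, OF less_imp_le[OF tau]]
    by (intro nn_integral_mono ennreal_leI) (metis pt mult.commute)
  also have "\<dots> = ennreal \<tau>"
    by (subst nn_integral_cmult) (auto simp: nn_integral_normal_density[OF tau])
  finally show ?thesis by (simp add: \<tau>_def)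
qed

definition gvec :: "'i set \<Rightarrow> ('i \<Rightarrow> real) \<Rightarrow> ('i \<Rightarrow> real) measure" where
  "gvec I \<mu> = PiM I (\<lambda>i. density lborel (\<lambda>x. ennreal (normal_density (\<mu> i) 1 x)))"

lemma prob_space_gvec: "prob_space (gvec I \<mu>)"
  unfolding gvec_def by (intro prob_space_PiM prob_space_normal_density) simp

lemma sets_gvec: "sets (gvec I \<mu>) = sets (PiM I (\<lambda>_. borel))"
  unfolding gvec_def by (intro sets_PiM_cong) auto

lemma space_gvec: "space (gvec I \<mu>) = space (PiM I (\<lambda>_. borel))"
  using sets_gvec sets_eq_imp_space_eq by blast

lemma measurable_gvec_iff: "measurable (gvec I \<mu>) N = measurable (PiM I (\<lambda>_. borel)) N"
  by (rule measurable_cong_sets[OF sets_gvec refl])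

lemma coord_distr_gvec:
  assumes "i \<in> I"
  shows "distributed (gvec I \<mu>) lborel (\<lambda>\<theta>. \<theta> i) (normal_density (\<mu> i) 1)"
proof -
  let ?G = "\<lambda>i. density lborel (\<lambda>x. ennreal (normal_density (\<mu> i) 1 x))"
  have meas: "(\<lambda>\<theta>. \<theta> i) \<in> measurable (gvec I \<mu>) lborel"
    unfolding measurable_gvec_iff using assms by measurable
  have d: "distr (gvec I \<mu>) (?G i) (\<lambda>\<theta>. \<theta> i) = ?G i"
    unfolding gvec_def by (intro distr_PiM_component prob_space_normal_density assms) simp
  have "distr (gvec I \<mu>) lborel (\<lambda>\<theta>. \<theta> i) = distr (gvec I \<mu>) (?G i) (\<lambda>\<theta>. \<theta> i)"
  proof (rule measure_eqI)
    show "sets (distr (gvec I \<mu>) lborel (\<lambda>\<theta>. \<theta> i)) = sets (distr (gvec I \<mu>) (?G i) (\<lambda>\<theta>. \<theta> i))"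
      by simp
  next
    fix A assume A: "A \<in> sets (distr (gvec I \<mu>) lborel (\<lambda>\<theta>. \<theta> i))"
    have meas': "(\<lambda>\<theta>. \<theta> i) \<in> measurable (gvec I \<mu>) (?G i)"
      using meas by (simp cong: measurable_cong_sets)
    show "emeasure (distr (gvec I \<mu>) lborel (\<lambda>\<theta>. \<theta> i)) A = emeasure (distr (gvec I \<mu>) (?G i) (\<lambda>\<theta>. \<theta> i)) A"
      using A meas meas' by (simp add: emeasure_distr)
  qed
  then show ?thesis
    unfolding distributed_def using d meas by simp
qed

lemma indep_coords_gvec:
  assumes "I \<noteq> {}"
  shows "prob_space.indep_vars (gvec I \<mu>) (\<lambda>_. borel) (\<lambda>i \<theta>. \<theta> i) I"
proof -
  interpret prob_space "gvec I \<mu>" by (rule prob_space_gvec)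
  let ?G = "\<lambda>i. density lborel (\<lambda>x. ennreal (normal_density (\<mu> i) 1 x))"
  have rv: "random_variable (?G i) (\<lambda>\<theta>. \<theta> i)" if "i \<in> I" for i
    unfolding measurable_gvec_iff using that by (simp cong: measurable_cong_sets) measurable
  have "distr (gvec I \<mu>) (\<Pi>\<^sub>M i\<in>I. ?G i) (\<lambda>x. \<lambda>i\<in>I. x i) = gvec I \<mu>"
  proof -
    have "distr (gvec I \<mu>) (\<Pi>\<^sub>M i\<in>I. ?G i) (\<lambda>x. \<lambda>i\<in>I. x i) = distr (gvec I \<mu>) (gvec I \<mu>) (\<lambda>x. x)"
      by (intro distr_cong) (auto simp: gvec_def space_PiM PiE_def extensional_restrict)
    then show ?thesis by simp
  qed
  also have "\<dots> = (\<Pi>\<^sub>M i\<in>I. distr (gvec I \<mu>) (?G i) (\<lambda>x. x i))"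
    unfolding gvec_def
    by (intro PiM_cong refl distr_PiM_component[symmetric] prob_space_normal_density) auto
  finally have "indep_vars ?G (\<lambda>i \<theta>. \<theta> i) I"
    using indep_vars_iff_distr_eq_PiM'[OF assms rv] by simp
  then show ?thesis
    unfolding indep_vars_def by (simp cong: measurable_cong_sets)
qed

lemma law_linear_gvec:
  assumes fin: "finite I" and K: "K \<subseteq> I" and pos: "0 < (\<Sum>k\<in>K. (a k)\<^sup>2)"
  shows "distributed (gvec I \<mu>) lborel (\<lambda>\<theta>. \<Sum>k\<in>K. a k * \<theta> k)
           (normal_density (\<Sum>k\<in>K. a k * \<mu> k) (sqrt (\<Sum>k\<in>K. (a k)\<^sup>2)))"
proof -
  interpret prob_space "gvec I \<mu>" by (rule prob_space_gvec)
  define K' where "K' = {k\<in>K. a k \<noteq> 0}"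
  have finK: "finite K" using fin K finite_subset by blast
  have finK': "finite K'" using finK by (simp add: K'_def)
  have K'K: "K' \<subseteq> K" by (auto simp: K'_def)
  have ne: "K' \<noteq> {}"
  proof
    assume "K' = {}"
    then have "\<forall>k\<in>K. a k = 0" by (auto simp: K'_def)
    then show False using pos by simp
  qed
  have s1: "(\<Sum>k\<in>K. a k * \<theta> k) = (\<Sum>k\<in>K'. a k * \<theta> k)" for \<theta> :: "'a \<Rightarrow> real"
    by (rule sum.mono_neutral_right[OF finK K'K]) (auto simp: K'_def)
  have s2: "(\<Sum>k\<in>K. a k * \<mu> k) = (\<Sum>k\<in>K'. a k * \<mu> k)"
    by (rule sum.mono_neutral_right[OF finK K'K]) (auto simp: K'_def)
  have s3: "(\<Sum>k\<in>K. (a k)\<^sup>2) = (\<Sum>k\<in>K'. \<bar>a k\<bar>\<^sup>2)"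
    by (simp, rule sum.mono_neutral_right[OF finK K'K]) (auto simp: K'_def)
  have I_ne: "I \<noteq> {}" using ne K'K K by blast
  have ind: "indep_vars (\<lambda>_. borel) (\<lambda>k \<theta>. a k * \<theta> k) K'"
    by (rule indep_vars_compose2[OF indep_vars_subset[OF indep_coords_gvec[OF I_ne]]])
       (use K'K K in auto)
  have dist: "distributed (gvec I \<mu>) lborel (\<lambda>\<theta>. a k * \<theta> k) (normal_density (a k * \<mu> k) \<bar>a k\<bar>)"
    if "k \<in> K'" for k
  proof -
    have "distributed (gvec I \<mu>) lborel (\<lambda>\<theta>. 0 + a k * \<theta> k) (normal_density (0 + a k * \<mu> k) (\<bar>a k\<bar> * 1))"
      by (rule normal_density_affine[OF coord_distr_gvec]) (use that K'K K in \<open>auto simp: K'_def\<close>)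
    then show ?thesis by simp
  qed
  have "distributed (gvec I \<mu>) lborel (\<lambda>\<theta>. \<Sum>k\<in>K'. a k * \<theta> k)
           (normal_density (\<Sum>k\<in>K'. a k * \<mu> k) (sqrt (\<Sum>k\<in>K'. \<bar>a k\<bar>\<^sup>2)))"
    by (rule sum_indep_normal[OF finK' ne ind]) (auto simp: K'_def dist)
  then show ?thesis unfolding s1 s2 s3 .
qed

lemma density_normal_shift:
  "density lborel (\<lambda>x. ennreal (normal_density c 1 x)) =
   density std_normal_distribution (\<lambda>t. ennreal (exp (c * t - c\<^sup>2 / 2)))"
proof -
  have pt: "normal_density 0 1 t * exp (c * t - c\<^sup>2 / 2) = normal_density c 1 t" for t
  proof -
    have e: "- (t - 0)\<^sup>2 / (2 * 1\<^sup>2) + (c * t - c\<^sup>2 / 2) = - (t - c)\<^sup>2 / (2 * 1\<^sup>2)"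
      by (simp add: field_simps power2_eq_square)
    show ?thesis unfolding normal_density_def mult.assoc exp_add[symmetric] e ..
  qed
  show ?thesis
    by (subst density_density_eq) (auto simp: ennreal_mult'[symmetric] pt)
qed

lemma tilt_gvec:
  assumes fin: "finite I"
  shows "gvec I c = density (gvec I (\<lambda>_. 0)) (\<lambda>\<theta>. ennreal (\<Prod>i\<in>I. exp (c i * \<theta> i - (c i)\<^sup>2 / 2)))"
proof -
  let ?G0 = "\<lambda>i::'a. std_normal_distribution"
  let ?Gc = "\<lambda>i. density lborel (\<lambda>x. ennreal (normal_density (c i) 1 x))"
  interpret Gc: product_sigma_finite ?Gc
    by (simp add: product_sigma_finite_def prob_space_imp_sigma_finite prob_space_normal_density)
  interpret G0: product_sigma_finite ?G0
    by (simp add: product_sigma_finite_def prob_space_imp_sigma_finite prob_space_normal_density)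
  let ?f = "\<lambda>\<theta>. ennreal (\<Prod>i\<in>I. exp (c i * \<theta> i - (c i)\<^sup>2 / 2))"
  have "density (PiM I ?G0) ?f = PiM I ?Gc"
  proof (rule Gc.PiM_eqI[OF fin])
    show "sets (density (PiM I ?G0) ?f) = sets (PiM I ?Gc)"
      by (simp, intro sets_PiM_cong) auto
  next
    fix A assume A: "\<And>i. i \<in> I \<Longrightarrow> A i \<in> sets (?Gc i)"
    have A': "A i \<in> sets borel" if "i \<in> I" for i using A[OF that] by simp
    have "emeasure (density (PiM I ?G0) ?f) (Pi\<^sub>E I A) = (\<integral>\<^sup>+ \<theta>. ?f \<theta> * indicator (Pi\<^sub>E I A) \<theta> \<partial>PiM I ?G0)"
      by (rule emeasure_density) (use A' in \<open>auto intro!: sets_PiM_I_finite fin\<close>)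
    also have "\<dots> = (\<integral>\<^sup>+ \<theta>. (\<Prod>i\<in>I. ennreal (exp (c i * \<theta> i - (c i)\<^sup>2 / 2)) * indicator (A i) (\<theta> i)) \<partial>PiM I ?G0)"
    proof (rule nn_integral_cong)
      fix \<theta> assume "\<theta> \<in> space (PiM I ?G0)"
      then have ext: "\<theta> \<in> extensional I" by (simp add: space_PiM PiE_def)
      have "indicator (Pi\<^sub>E I A) \<theta> = (\<Prod>i\<in>I. indicator (A i) (\<theta> i) :: ennreal)"
        using ext by (simp add: indicator_def PiE_def Pi_def prod_eq_1_iff fin) (auto simp: fin)
      then show "?f \<theta> * indicator (Pi\<^sub>E I A) \<theta> = (\<Prod>i\<in>I. ennreal (exp (c i * \<theta> i - (c i)\<^sup>2 / 2)) * indicator (A i) (\<theta> i))"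
        by (simp add: prod.distrib prod_ennreal)
    qed
    also have "\<dots> = (\<Prod>i\<in>I. \<integral>\<^sup>+ t. ennreal (exp (c i * t - (c i)\<^sup>2 / 2)) * indicator (A i) t \<partial>?G0 i)"
      by (rule G0.product_nn_integral_prod[OF fin]) (use A' in auto)
    also have "\<dots> = (\<Prod>i\<in>I. emeasure (?Gc i) (A i))"
    proof (rule prod.cong[OF refl])
      fix i assume i: "i \<in> I"
      show "(\<integral>\<^sup>+ t. ennreal (exp (c i * t - (c i)\<^sup>2 / 2)) * indicator (A i) t \<partial>?G0 i) = emeasure (?Gc i) (A i)"
        unfolding density_normal_shift[of "c i"]
        by (rule emeasure_density[symmetric]) (use A'[OF i] in auto)
    qed
    finally show "emeasure (density (PiM I ?G0) ?f) (Pi\<^sub>E I A) = (\<Prod>i\<in>I. emeasure (?Gc i) (A i))" .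
  qed
  then show ?thesis unfolding gvec_def by simp
qed

lemma block_indep_gvec:
  assumes I: "I \<noteq> {}" and L: "finite L" and B: "\<And>j. j \<in> L \<Longrightarrow> B j \<subseteq> I"
    and disj: "disjoint_family_on B L"
    and F: "\<And>j. j \<in> L \<Longrightarrow> F j \<in> borel_measurable (PiM (B j) (\<lambda>_. borel))"
  shows "(\<integral>\<^sup>+ \<theta>. (\<Prod>j\<in>L. F j (restrict \<theta> (B j))) \<partial>gvec I \<mu>)
       = (\<Prod>j\<in>L. \<integral>\<^sup>+ \<theta>. F j (restrict \<theta> (B j)) \<partial>gvec I \<mu>)"
proof -
  interpret prob_space "gvec I \<mu>" by (rule prob_space_gvec)
  have "indep_vars (\<lambda>j. PiM (B j) (\<lambda>_. borel)) (\<lambda>j \<theta>. restrict (\<lambda>i. \<theta> i) (B j)) L"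
    by (rule indep_vars_restrict[OF indep_coords_gvec[OF I] B disj])
  then have "indep_vars (\<lambda>_. borel) (\<lambda>j \<theta>. F j (restrict (\<lambda>i. \<theta> i) (B j))) L"
    by (rule indep_vars_compose2) (rule F)
  then show ?thesis
    using indep_vars_nn_integral[OF L] by simp
qed

definition Wb :: "nat \<Rightarrow> nat \<Rightarrow> (nat \<times> nat + nat) set" where
  "Wb d j = Inl ` ({j} \<times> {..<d})"

definition Blk :: "nat \<Rightarrow> nat \<Rightarrow> (nat \<times> nat + nat) set" where
  "Blk d j = Wb d j \<union> {Inr j}"

definition cf :: "(nat \<Rightarrow> real) \<Rightarrow> (nat \<times> nat + nat) \<Rightarrow> real" where
  "cf y i = (case i of Inl jk \<Rightarrow> y (snd jk) | Inr _ \<Rightarrow> 0)"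

lemma param_measure_gvec: "param_measure d1 d = gvec (param_index d1 d) (\<lambda>_. 0)"
  unfolding param_measure_def gvec_def std_gauss_def ..

lemma finite_param_index: "finite (param_index d1 d)"
  unfolding param_index_def by auto

lemma Wb_sub: "j < d1 \<Longrightarrow> Wb d j \<subseteq> param_index d1 d"
  unfolding Wb_def param_index_def by auto

lemma Blk_sub: "j < d1 \<Longrightarrow> Blk d j \<subseteq> param_index d1 d"
  unfolding Blk_def Wb_def param_index_def by auto

lemma inj_Wb: "inj_on (\<lambda>k. Inl (j, k) :: nat \<times> nat + nat) A"
  by (auto simp: inj_on_def)

lemma Wb_eq: "Wb d j = (\<lambda>k. Inl (j, k)) ` {..<d}"
  unfolding Wb_def by auto

lemma sum_Wb: "(\<Sum>i\<in>Wb d j. f i) = (\<Sum>k<d. f (Inl (j, k)))"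
  unfolding Wb_eq by (subst sum.reindex[OF inj_Wb]) simp

lemma preact_cf: "(\<Sum>i\<in>Wb d j. cf y i * \<theta> i) = preact d \<theta> j y"
  unfolding sum_Wb preact_def cf_def by (simp add: mult.commute)

lemma vnorm_cf: "(\<Sum>i\<in>Wb d j. (cf y i)\<^sup>2) = (vnorm d y)\<^sup>2"
  unfolding sum_Wb vnorm_def cf_def by (simp add: sum_nonneg)

lemma vnorm_nonneg: "0 \<le> vnorm d y"
  unfolding vnorm_def by (simp add: sum_nonneg)

lemma preact_diff: "preact d \<theta> j x - preact d \<theta> j x' = preact d \<theta> j (\<lambda>k. x k - x' k)"
  unfolding preact_def by (simp add: sum_subtractf[symmetric] algebra_simps)

lemma preact_restrict: "Wb d j \<subseteq> B \<Longrightarrow> preact d (restrict \<theta> B) j y = preact d \<theta> j y"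
  unfolding preact_def Wb_def by (intro sum.cong) auto

lemma coord_meas: "i \<in> I \<Longrightarrow> (\<lambda>\<theta>. \<theta> i) \<in> borel_measurable (PiM I (\<lambda>_. borel))"
  by measurable

lemma preact_meas:
  assumes "Wb d j \<subseteq> I"
  shows "(\<lambda>\<theta>. preact d \<theta> j y) \<in> borel_measurable (PiM I (\<lambda>_. borel))"
  unfolding preact_def
  by (intro borel_measurable_sum borel_measurable_times coord_meas borel_measurable_const)
     (use assms in \<open>auto simp: Wb_def\<close>)

lemma law_preact:
  assumes fin: "finite I" and W: "Wb d j \<subseteq> I" and pos: "0 < vnorm d y"
  shows "distributed (gvec I \<mu>) lborel (\<lambda>\<theta>. preact d \<theta> j y)
           (normal_density (preact d \<mu> j y) (vnorm d y))"
proof -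
  have p: "0 < (\<Sum>i\<in>Wb d j. (cf y i)\<^sup>2)" unfolding vnorm_cf using pos by simp
  have "distributed (gvec I \<mu>) lborel (\<lambda>\<theta>. \<Sum>i\<in>Wb d j. cf y i * \<theta> i)
           (normal_density (\<Sum>i\<in>Wb d j. cf y i * \<mu> i) (sqrt (\<Sum>i\<in>Wb d j. (cf y i)\<^sup>2)))"
    by (rule law_linear_gvec[OF fin W p])
  then show ?thesis unfolding preact_cf vnorm_cf using vnorm_nonneg[of d y] by simp
qed

lemma relu_meas[measurable]: "relu \<in> borel_measurable borel"
  unfolding relu_def by measurable

lemma relu_deriv_meas[measurable]: "relu_deriv \<in> borel_measurable borel"
  unfolding relu_deriv_def by measurable

lemma dist_nn:
  assumes "distributed M lborel X (\<lambda>x. ennreal (f x))" "g \<in> borel_measurable borel"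
  shows "(\<integral>\<^sup>+ \<omega>. g (X \<omega>) \<partial>M) = (\<integral>\<^sup>+ t. g t \<partial>density lborel (\<lambda>x. ennreal (f x)))"
proof -
  have "(\<integral>\<^sup>+ \<omega>. g (X \<omega>) \<partial>M) = (\<integral>\<^sup>+ t. g t \<partial>distr M lborel X)"
    using assms by (subst nn_integral_distr) (auto simp: distributed_def)
  also have "distr M lborel X = density lborel (\<lambda>x. ennreal (f x))"
    using assms(1) by (simp add: distributed_def)
  finally show ?thesis .
qed

lemma vnorm_zero: assumes "vnorm d y = 0" "k < d" shows "y k = 0"
proof -
  have "(\<Sum>k<d. (y k)\<^sup>2) = 0" using assms(1) by (simp add: vnorm_def)
  then have "\<forall>k\<in>{..<d}. (y k)\<^sup>2 = 0" by (subst (asm) sum_nonneg_eq_0_iff) auto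
  then show ?thesis using assms(2) by simp
qed

lemma preact_zero: "vnorm d y = 0 \<Longrightarrow> preact d \<theta> j y = 0"
  unfolding preact_def by (auto simp: vnorm_zero)

lemma mgf_v:
  assumes fin: "finite I" and i: "Inr j \<in> I" and s: "2 * s < 1"
  shows "(\<integral>\<^sup>+ \<theta>. ennreal (exp (s * (\<theta> (Inr j))\<^sup>2)) \<partial>gvec I (\<lambda>_. 0)) = ennreal (1 / sqrt (1 - 2 * s))"
proof -
  have "(\<integral>\<^sup>+ \<theta>. ennreal (exp (s * (\<theta> (Inr j))\<^sup>2)) \<partial>gvec I (\<lambda>_. 0))
      = (\<integral>\<^sup>+ t. ennreal (exp (s * t\<^sup>2)) \<partial>density lborel (\<lambda>x. ennreal (normal_density 0 1 x)))"
    using dist_nn[OF coord_distr_gvec[OF i, of "\<lambda>_. 0"], of "\<lambda>t. ennreal (exp (s * t\<^sup>2))"] by simp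
  also have "\<dots> = ennreal (1 / sqrt (1 - 2 * s * 1\<^sup>2))"
    by (rule gauss_D1) (use s in auto)
  finally show ?thesis by simp
qed

lemma mgf_h:
  assumes fin: "finite I" and W: "Wb d j \<subseteq> I" and s: "2 * s * (vnorm d y)\<^sup>2 < 1"
  shows "(\<integral>\<^sup>+ \<theta>. ennreal (exp (s * (preact d \<theta> j y)\<^sup>2)) \<partial>gvec I (\<lambda>_. 0))
         = ennreal (1 / sqrt (1 - 2 * s * (vnorm d y)\<^sup>2))"
proof (cases "vnorm d y = 0")
  case True
  interpret prob_space "gvec I (\<lambda>_. 0)" by (rule prob_space_gvec)
  show ?thesis using True emeasure_space_1 by (simp add: preact_zero)
next
  case False
  then have pos: "0 < vnorm d y" using vnorm_nonneg[of d y] by simp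
  have m0: "preact d (\<lambda>_. 0) j y = 0" unfolding preact_def by simp
  have "(\<integral>\<^sup>+ \<theta>. ennreal (exp (s * (preact d \<theta> j y)\<^sup>2)) \<partial>gvec I (\<lambda>_. 0))
      = (\<integral>\<^sup>+ t. ennreal (exp (s * t\<^sup>2)) \<partial>density lborel (\<lambda>x. ennreal (normal_density 0 (vnorm d y) x)))"
    using dist_nn[OF law_preact[OF fin W pos, of "\<lambda>_. 0"], of "\<lambda>t. ennreal (exp (s * t\<^sup>2))"] m0 by simp
  also have "\<dots> = ennreal (1 / sqrt (1 - 2 * s * (vnorm d y)\<^sup>2))"
    by (rule gauss_D1[OF s pos])
  finally show ?thesis .
qed

definition flipf :: "nat \<Rightarrow> nat \<Rightarrow> (nat \<Rightarrow> real) \<Rightarrow> (nat \<Rightarrow> real) \<Rightarrow> (nat \<times> nat + nat \<Rightarrow> real) \<Rightarrow> real" where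
  "flipf d j x x' \<theta> = (if relu_deriv (preact d \<theta> j x) = relu_deriv (preact d \<theta> j x') then 0 else 1)"

lemma flipf_le:
  assumes "0 \<le> \<alpha>"
  shows "flipf d j x x' \<theta> \<le> exp (\<alpha> * (preact d \<theta> j (\<lambda>k. x k - x' k))\<^sup>2) * exp (- \<alpha> * (preact d \<theta> j x)\<^sup>2)"
proof (cases "relu_deriv (preact d \<theta> j x) = relu_deriv (preact d \<theta> j x')")
  case True then show ?thesis by (simp add: flipf_def)
next
  case False
  define g where "g = preact d \<theta> j x"
  define h where "h = preact d \<theta> j (\<lambda>k. x k - x' k)"
  have g': "preact d \<theta> j x' = g - h" unfolding g_def h_def preact_diff[symmetric] by simp
  have "relu_deriv g \<noteq> relu_deriv (g - h)" using False unfolding g' g_def[symmetric] .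
  then have "(g > 0) \<noteq> (g - h > 0)" by (auto simp: relu_deriv_def split: if_splits)
  then have "\<bar>g\<bar> \<le> \<bar>h\<bar>" by auto
  then have "g\<^sup>2 \<le> h\<^sup>2" by (simp add: abs_le_square_iff)
  then have "0 \<le> \<alpha> * h\<^sup>2 + - \<alpha> * g\<^sup>2" using assms
    by (metis add.commute diff_ge_0_iff_ge mult_left_mono mult_minus_left uminus_add_conv_diff)
  then have "1 \<le> exp (\<alpha> * h\<^sup>2) * exp (- \<alpha> * g\<^sup>2)" by (simp add: exp_add[symmetric])
  then show ?thesis using False by (simp add: flipf_def g_def h_def)
qed

lemma preact_meas_gvec[measurable]:
  assumes "Wb d j \<subseteq> I"
  shows "(\<lambda>\<theta>. preact d \<theta> j y) \<in> borel_measurable (gvec I \<mu>)"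
  unfolding measurable_gvec_iff by (rule preact_meas[OF assms])

lemma prob_flip:
  assumes fin: "finite I" and W: "Wb d j \<subseteq> I" and x: "vnorm d x = 1"
  shows "(\<integral>\<^sup>+ \<theta>. ennreal (flipf d j x x' \<theta>) \<partial>gvec I (\<lambda>_. 0)) \<le> ennreal (2 * vnorm d (\<lambda>k. x k - x' k))"
proof (cases "vnorm d (\<lambda>k. x k - x' k) = 0")
  case True
  have "flipf d j x x' \<theta> = 0" for \<theta>
  proof -
    have "preact d \<theta> j x - preact d \<theta> j x' = 0" unfolding preact_diff using True by (rule preact_zero)
    then show ?thesis by (simp add: flipf_def)
  qed
  then show ?thesis by simp
next
  case False
  define u where "u = (\<lambda>k. x k - x' k)"
  define \<nu> where "\<nu> = vnorm d u"
  have nu: "0 < \<nu>" using False vnorm_nonneg[of d u] by (simp add: \<nu>_def u_def)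
  define \<alpha> where "\<alpha> = 1 / (4 * \<nu>\<^sup>2)"
  have a: "0 < \<alpha>" using nu by (simp add: \<alpha>_def)
  define r where "r = sqrt (2 * \<alpha>)"
  have r2: "r\<^sup>2 = 2 * \<alpha>" using a by (simp add: r_def)
  let ?M0 = "gvec I (\<lambda>_. 0)"
  let ?h = "\<lambda>\<theta>. preact d \<theta> j u"
  let ?g = "\<lambda>\<theta>. preact d \<theta> j x"
  interpret M0: prob_space ?M0 by (rule prob_space_gvec)
  interpret S: prob_space std_normal_distribution by (rule prob_space_normal_density) simp
  interpret P: pair_sigma_finite ?M0 std_normal_distribution
    by (intro pair_sigma_finite.intro M0.sigma_finite_measure_axioms S.sigma_finite_measure_axioms)
  note [measurable] = preact_meas_gvec[OF W]
  have "(\<integral>\<^sup>+ \<theta>. ennreal (flipf d j x x' \<theta>) \<partial>?M0)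
      \<le> (\<integral>\<^sup>+ \<theta>. ennreal (exp (\<alpha> * (?h \<theta>)\<^sup>2)) * ennreal (exp (- \<alpha> * (?g \<theta>)\<^sup>2)) \<partial>?M0)"
    by (intro nn_integral_mono, subst ennreal_mult'[symmetric], simp, rule ennreal_leI, unfold u_def, rule flipf_le, rule less_imp_le[OF a])
  also have "\<dots> = (\<integral>\<^sup>+ \<theta>. (\<integral>\<^sup>+ z. ennreal (exp (r * ?h \<theta> * z)) * ennreal (exp (- \<alpha> * (?g \<theta>)\<^sup>2)) \<partial>std_normal_distribution) \<partial>?M0)"
  proof (rule nn_integral_cong)
    fix \<theta>
    have "ennreal (exp (\<alpha> * (?h \<theta>)\<^sup>2)) = (\<integral>\<^sup>+ z. ennreal (exp (r * ?h \<theta> * z)) \<partial>std_normal_distribution)"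
      using gauss_D2[of "r * ?h \<theta>"] r2 by (simp add: power_mult_distrib)
    then show "ennreal (exp (\<alpha> * (?h \<theta>)\<^sup>2)) * ennreal (exp (- \<alpha> * (?g \<theta>)\<^sup>2)) =
      (\<integral>\<^sup>+ z. ennreal (exp (r * ?h \<theta> * z)) * ennreal (exp (- \<alpha> * (?g \<theta>)\<^sup>2)) \<partial>std_normal_distribution)"
      by (simp add: nn_integral_multc)
  qed
  also have "\<dots> = (\<integral>\<^sup>+ z. (\<integral>\<^sup>+ \<theta>. ennreal (exp (r * ?h \<theta> * z)) * ennreal (exp (- \<alpha> * (?g \<theta>)\<^sup>2)) \<partial>?M0) \<partial>std_normal_distribution)"
    by (rule P.Fubini'[symmetric]) measurable
  also have "\<dots> \<le> (\<integral>\<^sup>+ z. ennreal (exp ((\<alpha> * \<nu>\<^sup>2) * z\<^sup>2)) * ennreal (1 / sqrt (2 * \<alpha>)) \<partial>std_normal_distribution)"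
  proof (rule nn_integral_mono)
    fix z
    define c where "c = (\<lambda>i. if i \<in> Wb d j then r * z * cf u i else 0)"
    have sc: "(\<Sum>i\<in>I. c i * \<theta> i) = r * z * ?h \<theta>" for \<theta>
    proof -
      have "(\<Sum>i\<in>I. c i * \<theta> i) = (\<Sum>i\<in>Wb d j. c i * \<theta> i)"
        by (rule sum.mono_neutral_right[OF fin W]) (auto simp: c_def)
      also have "\<dots> = (\<Sum>i\<in>Wb d j. (r * z) * (cf u i * \<theta> i))"
        by (intro sum.cong) (auto simp: c_def)
      also have "\<dots> = r * z * ?h \<theta>" by (simp add: sum_distrib_left[symmetric] preact_cf)
      finally show ?thesis .
    qed
    have sc2: "(\<Sum>i\<in>I. (c i)\<^sup>2 / 2) = \<alpha> * \<nu>\<^sup>2 * z\<^sup>2"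
    proof -
      have "(\<Sum>i\<in>I. (c i)\<^sup>2 / 2) = (\<Sum>i\<in>Wb d j. (c i)\<^sup>2 / 2)"
        by (rule sum.mono_neutral_right[OF fin W]) (auto simp: c_def)
      also have "\<dots> = (\<Sum>i\<in>Wb d j. (r\<^sup>2 * z\<^sup>2 / 2) * (cf u i)\<^sup>2)"
        by (intro sum.cong) (auto simp: c_def power_mult_distrib)
      also have "\<dots> = (r\<^sup>2 * z\<^sup>2 / 2) * \<nu>\<^sup>2" by (simp only: sum_distrib_left[symmetric] vnorm_cf \<nu>_def)
      finally show ?thesis using r2 by simp
    qed
    have dens: "(\<Prod>i\<in>I. exp (c i * \<theta> i - (c i)\<^sup>2 / 2)) = exp (r * ?h \<theta> * z) / exp (\<alpha> * \<nu>\<^sup>2 * z\<^sup>2)" for \<theta>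
    proof -
      have "(\<Prod>i\<in>I. exp (c i * \<theta> i - (c i)\<^sup>2 / 2)) = exp (\<Sum>i\<in>I. (c i * \<theta> i - (c i)\<^sup>2 / 2))"
        by (rule exp_sum[OF fin, symmetric])
      also have "\<dots> = exp (r * z * ?h \<theta> - \<alpha> * \<nu>\<^sup>2 * z\<^sup>2)"
        by (simp only: sum_subtractf sc sc2)
      also have "\<dots> = exp (r * ?h \<theta> * z) / exp (\<alpha> * \<nu>\<^sup>2 * z\<^sup>2)"
        by (simp add: exp_diff mult_ac)
      finally show ?thesis .
    qed
    have "(\<integral>\<^sup>+ \<theta>. ennreal (exp (r * ?h \<theta> * z)) * ennreal (exp (- \<alpha> * (?g \<theta>)\<^sup>2)) \<partial>?M0)
        = (\<integral>\<^sup>+ \<theta>. ennreal (exp (\<alpha> * \<nu>\<^sup>2 * z\<^sup>2)) * (ennreal (\<Prod>i\<in>I. exp (c i * \<theta> i - (c i)\<^sup>2 / 2)) * ennreal (exp (- \<alpha> * (?g \<theta>)\<^sup>2))) \<partial>?M0)"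
      by (intro nn_integral_cong) (simp add: dens ennreal_mult'[symmetric])
    also have "\<dots> = ennreal (exp (\<alpha> * \<nu>\<^sup>2 * z\<^sup>2)) * (\<integral>\<^sup>+ \<theta>. ennreal (\<Prod>i\<in>I. exp (c i * \<theta> i - (c i)\<^sup>2 / 2)) * ennreal (exp (- \<alpha> * (?g \<theta>)\<^sup>2)) \<partial>?M0)"
    proof (rule nn_integral_cmult)
      have [measurable]: "(\<lambda>\<theta>. \<theta> i) \<in> borel_measurable ?M0" if "i \<in> I" for i
        unfolding measurable_gvec_iff using that by measurable
      show "(\<lambda>\<theta>. ennreal (\<Prod>i\<in>I. exp (c i * \<theta> i - (c i)\<^sup>2 / 2)) * ennreal (exp (- \<alpha> * (?g \<theta>)\<^sup>2))) \<in> borel_measurable ?M0"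
        by (intro borel_measurable_times_ennreal measurable_compose[OF _ measurable_ennreal] borel_measurable_prod) measurable
    qed
    also have "(\<integral>\<^sup>+ \<theta>. ennreal (\<Prod>i\<in>I. exp (c i * \<theta> i - (c i)\<^sup>2 / 2)) * ennreal (exp (- \<alpha> * (?g \<theta>)\<^sup>2)) \<partial>?M0)
        = (\<integral>\<^sup>+ \<theta>. ennreal (exp (- \<alpha> * (?g \<theta>)\<^sup>2)) \<partial>gvec I c)"
      unfolding tilt_gvec[OF fin, of c]
    proof (rule nn_integral_density[symmetric])
      have [measurable]: "(\<lambda>\<theta>. \<theta> i) \<in> borel_measurable ?M0" if "i \<in> I" for i
        unfolding measurable_gvec_iff using that by measurable
      show "(\<lambda>\<theta>. ennreal (\<Prod>i\<in>I. exp (c i * \<theta> i - (c i)\<^sup>2 / 2))) \<in> borel_measurable ?M0"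
        by (intro measurable_compose[OF _ measurable_ennreal] borel_measurable_prod) measurable
    qed measurable
    also have "\<dots> = (\<integral>\<^sup>+ t. ennreal (exp (- \<alpha> * t\<^sup>2)) \<partial>density lborel (\<lambda>t. ennreal (normal_density (preact d c j x) 1 t)))"
      using dist_nn[OF law_preact[OF fin W, of x c], of "\<lambda>t. ennreal (exp (- \<alpha> * t\<^sup>2))"] x by simp
    also have "\<dots> \<le> ennreal (1 / sqrt (2 * \<alpha>))" by (rule gauss_D3[OF a])
    finally show "(\<integral>\<^sup>+ \<theta>. ennreal (exp (r * ?h \<theta> * z)) * ennreal (exp (- \<alpha> * (?g \<theta>)\<^sup>2)) \<partial>?M0)
        \<le> ennreal (exp (\<alpha> * \<nu>\<^sup>2 * z\<^sup>2)) * ennreal (1 / sqrt (2 * \<alpha>))"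
      by (simp add: mult_left_mono)
  qed
  also have "\<dots> = (\<integral>\<^sup>+ z. ennreal (exp ((\<alpha> * \<nu>\<^sup>2) * z\<^sup>2)) \<partial>std_normal_distribution) * ennreal (1 / sqrt (2 * \<alpha>))"
    by (rule nn_integral_multc) measurable
  also have "(\<integral>\<^sup>+ z. ennreal (exp ((\<alpha> * \<nu>\<^sup>2) * z\<^sup>2)) \<partial>std_normal_distribution) = ennreal (1 / sqrt (1 - 2 * (\<alpha> * \<nu>\<^sup>2) * 1\<^sup>2))"
    by (rule gauss_D1) (use nu in \<open>auto simp: \<alpha>_def\<close>)
  also have "ennreal (1 / sqrt (1 - 2 * (\<alpha> * \<nu>\<^sup>2) * 1\<^sup>2)) * ennreal (1 / sqrt (2 * \<alpha>)) = ennreal (2 * \<nu>)"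
  proof -
    have e1: "\<alpha> * \<nu>\<^sup>2 = 1/4" using nu by (simp add: \<alpha>_def)
    have e2: "2 * \<alpha> = 1 / (2 * \<nu>\<^sup>2)" using nu by (simp add: \<alpha>_def)
    have "1 / sqrt (1 - 2 * (\<alpha> * \<nu>\<^sup>2) * 1\<^sup>2) * (1 / sqrt (2 * \<alpha>)) = 2 * \<nu>"
      unfolding e1 e2 using nu
      by (simp add: real_sqrt_divide real_sqrt_mult field_simps)
    moreover have nn: "0 \<le> 1 / sqrt (1 - 2 * (\<alpha> * \<nu>\<^sup>2) * 1\<^sup>2)" using e1 by simp
    ultimately show ?thesis by (simp only: ennreal_mult'[OF nn, symmetric])
  qed
  finally show ?thesis by (simp add: \<nu>_def u_def)
qed

lemma inv_sqrt_le: assumes "0 \<le> t" "t \<le> 1/2" shows "1 / sqrt (1 - t) \<le> 1 + t"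
proof -
  have "1 \<le> (1 + t)\<^sup>2 * (1 - t)"
  proof -
    have "(1 + t)\<^sup>2 * (1 - t) = 1 + t * (1 - t - t * t)" by (simp add: power2_eq_square algebra_simps)
    moreover have "t * t \<le> t * (1/2)" using assms by (intro mult_left_mono) auto
    then have "0 \<le> 1 - t - t * t" using assms by simp
    then have "0 \<le> t * (1 - t - t * t)" using assms by simp
    ultimately show ?thesis by simp
  qed
  then have "sqrt 1 \<le> sqrt ((1 + t)\<^sup>2 * (1 - t))" by (rule real_sqrt_le_mono)
  also have "\<dots> = (1 + t) * sqrt (1 - t)" using assms by (simp add: real_sqrt_mult)
  finally have "1 \<le> (1 + t) * sqrt (1 - t)" by simp
  moreover have "0 < sqrt (1 - t)" using assms by simp
  ultimately show ?thesis by (simp add: divide_le_eq mult.commute)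
qed

lemma final_real:
  assumes d: "0 < \<delta>" "\<delta> \<le> 2" and nu: "0 \<le> \<nu>" "\<nu> \<le> \<delta>" and P: "0 \<le> P" "P \<le> 2 * \<nu>"
  shows "1/2 * (1 / sqrt (1 - 2 * (\<delta>\<^sup>2 / 32))) + 1/2 * (P * (1 / sqrt (1 - 2 * ((\<delta>\<^sup>2 + 1) / 32))))
          + 1/2 * (1 / sqrt (1 - 2 * (1/32) * \<nu>\<^sup>2)) \<le> exp (2 * \<delta>)"
proof -
  have dd: "\<delta>\<^sup>2 \<le> 2 * \<delta>" using d by (simp add: power2_eq_square mult_right_mono)
  have nn: "\<nu>\<^sup>2 \<le> \<delta>\<^sup>2" using nu by (simp add: power_mono)
  have A: "1 / sqrt (1 - 2 * (\<delta>\<^sup>2 / 32)) \<le> 1 + \<delta>/8"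
  proof -
    have "1 / sqrt (1 - \<delta>\<^sup>2 / 16) \<le> 1 + \<delta>\<^sup>2 / 16" using dd d by (intro inv_sqrt_le) auto
    then show ?thesis using dd by simp
  qed
  have C: "1 / sqrt (1 - 2 * (1/32) * \<nu>\<^sup>2) \<le> 1 + \<delta>/8"
  proof -
    have "1 / sqrt (1 - \<nu>\<^sup>2 / 16) \<le> 1 + \<nu>\<^sup>2 / 16" using dd d nn by (intro inv_sqrt_le) auto
    then show ?thesis using dd nn by simp
  qed
  have B: "1 / sqrt (1 - 2 * ((\<delta>\<^sup>2 + 1) / 32)) \<le> 21/16"
  proof -
    have "1 / sqrt (1 - (\<delta>\<^sup>2 + 1) / 16) \<le> 1 + (\<delta>\<^sup>2 + 1) / 16" using dd d by (intro inv_sqrt_le) auto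
    moreover have eq: "2 * ((\<delta>\<^sup>2 + 1) / 32) = (\<delta>\<^sup>2 + 1) / 16" by simp
    moreover have "\<delta>\<^sup>2 \<le> 4" using dd d by simp
    then have "(\<delta>\<^sup>2 + 1) / 16 \<le> 5/16" by simp
    ultimately show ?thesis by (simp only: eq)
  qed
  have B': "P * (1 / sqrt (1 - 2 * ((\<delta>\<^sup>2 + 1) / 32))) \<le> 2 * \<delta> * (21/16)"
    using B P nu dd d by (intro mult_mono) auto
  have "1/2 * (1 / sqrt (1 - 2 * (\<delta>\<^sup>2 / 32))) + 1/2 * (P * (1 / sqrt (1 - 2 * ((\<delta>\<^sup>2 + 1) / 32))))
          + 1/2 * (1 / sqrt (1 - 2 * (1/32) * \<nu>\<^sup>2)) \<le> 1 + 2 * \<delta>"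
    using A B' C d by linarith
  also have "\<dots> \<le> exp (2 * \<delta>)" by (rule exp_ge_add_one_self[of "2*\<delta>", simplified add.commute])
  finally show ?thesis .
qed

lemma flipf_meas:
  assumes "Wb d j \<subseteq> I"
  shows "flipf d j x x' \<in> borel_measurable (PiM I (\<lambda>_. borel))"
proof -
  note [measurable] = preact_meas[OF assms]
  show ?thesis unfolding flipf_def[abs_def] by measurable
qed

lemma flipf_restrict: "Wb d j \<subseteq> B \<Longrightarrow> flipf d j x x' (restrict \<theta> B) = flipf d j x x' \<theta>"
  unfolding flipf_def by (simp add: preact_restrict)

lemma flipf_01: "flipf d j x x' \<theta> = 0 \<or> flipf d j x x' \<theta> = 1"
  unfolding flipf_def by auto

lemma indep_flip_v:
  assumes fin: "finite I" and W: "Wb d j \<subseteq> I" and R: "Inr j \<in> I"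
  shows "(\<integral>\<^sup>+ \<theta>. ennreal (flipf d j x x' \<theta>) * ennreal (exp (s * (\<theta> (Inr j))\<^sup>2)) \<partial>gvec I (\<lambda>_. 0))
       = (\<integral>\<^sup>+ \<theta>. ennreal (flipf d j x x' \<theta>) \<partial>gvec I (\<lambda>_. 0)) * (\<integral>\<^sup>+ \<theta>. ennreal (exp (s * (\<theta> (Inr j))\<^sup>2)) \<partial>gvec I (\<lambda>_. 0))"
proof -
  define B where "B = (\<lambda>b::bool. if b then Wb d j else {Inr j})"
  define F where "F = (\<lambda>(b::bool) \<rho>. if b then ennreal (flipf d j x x' \<rho>) else ennreal (exp (s * (\<rho> (Inr j))\<^sup>2)))"
  have I: "I \<noteq> {}" using R by auto
  have Bsub: "B b \<subseteq> I" for b using W R by (auto simp: B_def)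
  have disj: "disjoint_family_on B UNIV"
    by (auto simp: disjoint_family_on_def B_def Wb_def)
  have Fm: "F b \<in> borel_measurable (PiM (B b) (\<lambda>_. borel))" for b
  proof (cases b)
    case True
    have [measurable]: "flipf d j x x' \<in> borel_measurable (PiM (Wb d j) (\<lambda>_. borel))"
      by (rule flipf_meas) simp
    show ?thesis using True by (simp add: F_def B_def)
  next
    case False
    then show ?thesis by (simp add: F_def B_def) measurable
  qed
  have eq1: "(\<Prod>b\<in>UNIV. F b (restrict \<theta> (B b))) = ennreal (flipf d j x x' \<theta>) * ennreal (exp (s * (\<theta> (Inr j))\<^sup>2))" for \<theta>
    by (simp add: UNIV_bool F_def B_def flipf_restrict mult.commute)
  have eqT: "F True (restrict \<theta> (B True)) = ennreal (flipf d j x x' \<theta>)" for \<theta>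
    by (simp add: F_def B_def flipf_restrict)
  have eqF: "F False (restrict \<theta> (B False)) = ennreal (exp (s * (\<theta> (Inr j))\<^sup>2))" for \<theta>
    by (simp add: F_def B_def)
  have "(\<integral>\<^sup>+ \<theta>. (\<Prod>b\<in>UNIV. F b (restrict \<theta> (B b))) \<partial>gvec I (\<lambda>_. 0))
      = (\<Prod>b\<in>UNIV. \<integral>\<^sup>+ \<theta>. F b (restrict \<theta> (B b)) \<partial>gvec I (\<lambda>_. 0))"
    by (rule block_indep_gvec[OF I _ Bsub disj Fm]) simp
  then show ?thesis
    unfolding eq1 by (simp add: UNIV_bool eqT eqF mult.commute)
qed

definition Yn :: "nat \<Rightarrow> nat \<Rightarrow> (nat \<Rightarrow> real) \<Rightarrow> (nat \<Rightarrow> real) \<Rightarrow> real \<Rightarrow> (nat \<times> nat + nat \<Rightarrow> real) \<Rightarrow> real" where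
  "Yn d j x x' \<delta> \<theta> = (\<theta> (Inr j))\<^sup>2 * (\<delta>\<^sup>2 + flipf d j x x' \<theta>) + (preact d \<theta> j (\<lambda>k. x k - x' k))\<^sup>2"

lemma Yn_pt:
  "exp (Yn d j x x' \<delta> \<theta> / 64) \<le> 1/2 * exp (\<delta>\<^sup>2 / 32 * (\<theta> (Inr j))\<^sup>2)
     + 1/2 * (flipf d j x x' \<theta> * exp ((\<delta>\<^sup>2 + 1) / 32 * (\<theta> (Inr j))\<^sup>2))
     + 1/2 * exp (1/32 * (preact d \<theta> j (\<lambda>k. x k - x' k))\<^sup>2)"
proof -
  define v where "v = \<theta> (Inr j)"
  define f where "f = flipf d j x x' \<theta>"
  define h where "h = preact d \<theta> j (\<lambda>k. x k - x' k)"
  define a where "a = v\<^sup>2 * (\<delta>\<^sup>2 + f) / 64"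
  define b where "b = h\<^sup>2 / 64"
  have amgm: "exp (a + b) \<le> 1/2 * exp (2 * a) + 1/2 * exp (2 * b)"
  proof -
    have "0 \<le> (exp a - exp b)\<^sup>2" by simp
    then have "2 * (exp a * exp b) \<le> exp a * exp a + exp b * exp b"
      by (simp add: power2_eq_square algebra_simps)
    then show ?thesis by (simp add: exp_add[symmetric] mult_2[symmetric])
  qed
  have split: "exp (2 * a) \<le> exp (\<delta>\<^sup>2 / 32 * v\<^sup>2) + f * exp ((\<delta>\<^sup>2 + 1) / 32 * v\<^sup>2)"
  proof (cases "f = 0")
    case True
    then have "2 * a = \<delta>\<^sup>2 / 32 * v\<^sup>2" by (simp add: a_def)
    then show ?thesis using True by simp
  next
    case False
    then have f1: "f = 1" using flipf_01[of d j x x' \<theta>] unfolding f_def by auto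
    then have "2 * a = (\<delta>\<^sup>2 + 1) / 32 * v\<^sup>2" by (simp add: a_def algebra_simps)
    then show ?thesis using f1 by (simp add: add_increasing)
  qed
  have e: "Yn d j x x' \<delta> \<theta> / 64 = a + b" by (simp add: Yn_def a_def b_def v_def f_def h_def add_divide_distrib)
  have "exp (Yn d j x x' \<delta> \<theta> / 64) \<le> 1/2 * exp (2 * a) + 1/2 * exp (2 * b)" unfolding e by (rule amgm)
  also have "\<dots> \<le> 1/2 * exp (\<delta>\<^sup>2 / 32 * v\<^sup>2) + 1/2 * (f * exp ((\<delta>\<^sup>2 + 1) / 32 * v\<^sup>2)) + 1/2 * exp (1/32 * h\<^sup>2)"
    using split by (simp add: b_def algebra_simps)
  finally show ?thesis by (simp add: v_def f_def h_def)
qed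

lemma enn3: fixes a f b c :: real assumes "0\<le>a" "0\<le>f" "0\<le>b" "0\<le>c"
  shows "ennreal (1/2) * ennreal a + ennreal (1/2) * (ennreal f * ennreal b) + ennreal (1/2) * ennreal c = ennreal (1/2 * a + 1/2 * (f * b) + 1/2 * c)"
proof -
  have "ennreal (1/2 * a + 1/2 * (f * b) + 1/2 * c) = ennreal (1/2 * a) + ennreal (1/2 * (f * b)) + ennreal (1/2 * c)"
    using assms by (simp add: ennreal_plus[symmetric] del: ennreal_plus)
  also have "\<dots> = ennreal (1/2) * ennreal a + ennreal (1/2) * (ennreal f * ennreal b) + ennreal (1/2) * ennreal c"
    using assms by (simp only: ennreal_mult'[symmetric] ennreal_mult[symmetric])
  finally show ?thesis ..
qed

lemma neuron_mgf:
  assumes fin: "finite I" and W: "Wb d j \<subseteq> I" and R: "Inr j \<in> I" and x: "vnorm d x = 1"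
    and d: "0 < \<delta>" "\<delta> \<le> 2" and nu: "vnorm d (\<lambda>k. x k - x' k) \<le> \<delta>"
  shows "(\<integral>\<^sup>+ \<theta>. ennreal (exp (Yn d j x x' \<delta> \<theta> / 64)) \<partial>gvec I (\<lambda>_. 0)) \<le> ennreal (exp (2 * \<delta>))"
proof -
  let ?M0 = "gvec I (\<lambda>_. 0)"
  let ?u = "\<lambda>k. x k - x' k"
  define \<nu> where "\<nu> = vnorm d ?u"
  have nu0: "0 \<le> \<nu>" by (simp add: \<nu>_def vnorm_nonneg)
  have nud: "\<nu> \<le> \<delta>" using nu by (simp add: \<nu>_def)
  have dd: "\<delta>\<^sup>2 \<le> 4" using d by (metis abs_of_pos abs_le_square_iff dual_order.trans less_imp_le numeral_le_iff power2_eq_square real_sqrt_four real_sqrt_le_iff semiring_norm(69) abs_of_nonneg power2_abs real_sqrt_le_mono real_sqrt_pow2_iff zero_le_numeral)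
  have nn: "\<nu>\<^sup>2 \<le> \<delta>\<^sup>2" using nu0 nud by (simp add: power_mono)
  have [measurable]: "(\<lambda>\<theta>. \<theta> (Inr j)) \<in> borel_measurable ?M0"
    unfolding measurable_gvec_iff using R by measurable
  have [measurable]: "flipf d j x x' \<in> borel_measurable ?M0"
    unfolding measurable_gvec_iff by (rule flipf_meas[OF W])
  note [measurable] = preact_meas_gvec[OF W]
  define A where "A = 1 / sqrt (1 - 2 * (\<delta>\<^sup>2 / 32))"
  define B where "B = 1 / sqrt (1 - 2 * ((\<delta>\<^sup>2 + 1) / 32))"
  define C where "C = 1 / sqrt (1 - 2 * (1/32) * \<nu>\<^sup>2)"
  have A0: "0 \<le> A" and B0: "0 \<le> B" and C0: "0 \<le> C" using dd nn by (auto simp: A_def B_def C_def)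
  have IA: "(\<integral>\<^sup>+ \<theta>. ennreal (exp (\<delta>\<^sup>2 / 32 * (\<theta> (Inr j))\<^sup>2)) \<partial>?M0) = ennreal A"
    unfolding A_def by (rule mgf_v[OF fin R]) (use dd in simp)
  have IB: "(\<integral>\<^sup>+ \<theta>. ennreal (exp ((\<delta>\<^sup>2 + 1) / 32 * (\<theta> (Inr j))\<^sup>2)) \<partial>?M0) = ennreal B"
    unfolding B_def by (rule mgf_v[OF fin R]) (use dd in simp)
  have IC: "(\<integral>\<^sup>+ \<theta>. ennreal (exp (1/32 * (preact d \<theta> j ?u)\<^sup>2)) \<partial>?M0) = ennreal C"
    unfolding C_def \<nu>_def by (rule mgf_h[OF fin W]) (use dd nn in \<open>simp add: \<nu>_def\<close>)
  have IF: "(\<integral>\<^sup>+ \<theta>. ennreal (flipf d j x x' \<theta>) \<partial>?M0) \<le> ennreal (2 * \<nu>)"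
    unfolding \<nu>_def by (rule prob_flip[OF fin W x])
  have "(\<integral>\<^sup>+ \<theta>. ennreal (exp (Yn d j x x' \<delta> \<theta> / 64)) \<partial>?M0)
     \<le> (\<integral>\<^sup>+ \<theta>. ennreal (1/2) * ennreal (exp (\<delta>\<^sup>2 / 32 * (\<theta> (Inr j))\<^sup>2))
          + ennreal (1/2) * (ennreal (flipf d j x x' \<theta>) * ennreal (exp ((\<delta>\<^sup>2 + 1) / 32 * (\<theta> (Inr j))\<^sup>2)))
          + ennreal (1/2) * ennreal (exp (1/32 * (preact d \<theta> j ?u)\<^sup>2)) \<partial>?M0)"
  proof (rule nn_integral_mono)
    fix \<theta>
    have f0: "0 \<le> flipf d j x x' \<theta>" using flipf_01[of d j x x' \<theta>] by auto
    show "ennreal (exp (Yn d j x x' \<delta> \<theta> / 64))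
      \<le> ennreal (1/2) * ennreal (exp (\<delta>\<^sup>2 / 32 * (\<theta> (Inr j))\<^sup>2))
          + ennreal (1/2) * (ennreal (flipf d j x x' \<theta>) * ennreal (exp ((\<delta>\<^sup>2 + 1) / 32 * (\<theta> (Inr j))\<^sup>2)))
          + ennreal (1/2) * ennreal (exp (1/32 * (preact d \<theta> j ?u)\<^sup>2))"
      by (subst enn3, simp_all only: f0 exp_ge_zero) (rule ennreal_leI, rule Yn_pt)
  qed
  also have "\<dots> = ennreal (1/2) * (\<integral>\<^sup>+ \<theta>. ennreal (exp (\<delta>\<^sup>2 / 32 * (\<theta> (Inr j))\<^sup>2)) \<partial>?M0)
      + ennreal (1/2) * (\<integral>\<^sup>+ \<theta>. ennreal (flipf d j x x' \<theta>) * ennreal (exp ((\<delta>\<^sup>2 + 1) / 32 * (\<theta> (Inr j))\<^sup>2)) \<partial>?M0)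
      + ennreal (1/2) * (\<integral>\<^sup>+ \<theta>. ennreal (exp (1/32 * (preact d \<theta> j ?u)\<^sup>2)) \<partial>?M0)"
    by (simp add: nn_integral_add nn_integral_cmult)
  also have "\<dots> \<le> ennreal (1/2) * ennreal A + ennreal (1/2) * (ennreal (2 * \<nu>) * ennreal B) + ennreal (1/2) * ennreal C"
    unfolding indep_flip_v[OF fin W R] IA IB IC
    by (intro add_mono mult_left_mono mult_right_mono IF order.refl) auto
  also have "\<dots> = ennreal (1/2 * A + 1/2 * (2 * \<nu> * B) + 1/2 * C)"
    by (rule enn3) (use A0 B0 C0 nu0 in auto)
  also have "\<dots> \<le> ennreal (exp (2 * \<delta>))"
    unfolding A_def B_def C_def
    by (rule ennreal_leI, rule final_real[OF d nu0 nud]) (use nu0 in auto)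
  finally show ?thesis .
qed

lemma vnorm_sq: "(vnorm d y)\<^sup>2 = (\<Sum>k<d. (y k)\<^sup>2)"
  unfolding vnorm_def by (simp add: sum_nonneg)

lemma relu_lip: "\<bar>relu a - relu b\<bar> \<le> \<bar>a - b\<bar>"
  unfolding relu_def by auto

lemma W_part:
  assumes x: "vnorm d x = 1" and x': "vnorm d x' = 1" and nu: "vnorm d (\<lambda>k. x k - x' k) \<le> \<delta>"
  shows "(\<Sum>k<d. (relu_deriv (preact d \<theta> j x) * x k - relu_deriv (preact d \<theta> j x') * x' k)\<^sup>2)
         \<le> \<delta>\<^sup>2 + flipf d j x x' \<theta>"
proof -
  define s where "s = relu_deriv (preact d \<theta> j x)"
  define s' where "s' = relu_deriv (preact d \<theta> j x')"
  have sx: "(\<Sum>k<d. (x k)\<^sup>2) = 1" using x vnorm_sq[of d x] by simp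
  have sx': "(\<Sum>k<d. (x' k)\<^sup>2) = 1" using x' vnorm_sq[of d x'] by simp
  have su: "(\<Sum>k<d. (x k - x' k)\<^sup>2) \<le> \<delta>\<^sup>2"
    using vnorm_sq[of d "\<lambda>k. x k - x' k"] nu vnorm_nonneg[of d "\<lambda>k. x k - x' k"]
    by (metis power_mono)
  have d0: "0 \<le> \<delta>\<^sup>2" by simp
  have s01: "s = 0 \<or> s = 1" "s' = 0 \<or> s' = 1" by (auto simp: s_def s'_def relu_deriv_def)
  show ?thesis
    unfolding s_def[symmetric] s'_def[symmetric] flipf_def
    using s01 sx sx' su d0 by (auto simp: power2_commute)
qed

lemma grad_bound:
  assumes d1: "0 < d1" and x: "vnorm d x = 1" and x': "vnorm d x' = 1" and nu: "vnorm d (\<lambda>k. x k - x' k) \<le> \<delta>"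
  shows "grad_diff_norm d1 d \<theta> x x' \<le> sqrt ((\<Sum>j<d1. Yn d j x x' \<delta> \<theta>) / real d1)"
proof -
  let ?u = "\<lambda>k. x k - x' k"
  have W: "(\<Sum>k<d. (grad_W d1 d \<theta> x j k - grad_W d1 d \<theta> x' j k)\<^sup>2)
         \<le> (\<theta> (Inr j))\<^sup>2 * (\<delta>\<^sup>2 + flipf d j x x' \<theta>) / real d1" for j
  proof -
    have "(\<Sum>k<d. (grad_W d1 d \<theta> x j k - grad_W d1 d \<theta> x' j k)\<^sup>2)
        = (\<theta> (Inr j))\<^sup>2 / real d1 * (\<Sum>k<d. (relu_deriv (preact d \<theta> j x) * x k - relu_deriv (preact d \<theta> j x') * x' k)\<^sup>2)"
      unfolding grad_W_def sum_distrib_left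
      by (intro sum.cong refl) (simp add: power2_eq_square algebra_simps)
    also have "\<dots> \<le> (\<theta> (Inr j))\<^sup>2 / real d1 * (\<delta>\<^sup>2 + flipf d j x x' \<theta>)"
      by (intro mult_left_mono W_part[OF x x' nu]) auto
    finally show ?thesis by simp
  qed
  have V: "(grad_v d1 d \<theta> x j - grad_v d1 d \<theta> x' j)\<^sup>2 \<le> (preact d \<theta> j ?u)\<^sup>2 / real d1" for j
  proof -
    have "(grad_v d1 d \<theta> x j - grad_v d1 d \<theta> x' j)\<^sup>2 = (relu (preact d \<theta> j x) - relu (preact d \<theta> j x'))\<^sup>2 / real d1"
      unfolding grad_v_def using d1 by (simp add: power2_eq_square field_simps)
    also have "\<dots> \<le> (preact d \<theta> j x - preact d \<theta> j x')\<^sup>2 / real d1"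
      by (intro divide_right_mono) (auto simp: abs_le_square_iff[symmetric] relu_lip)
    finally show ?thesis unfolding preact_diff .
  qed
  have "(\<Sum>j<d1. \<Sum>k<d. (grad_W d1 d \<theta> x j k - grad_W d1 d \<theta> x' j k)\<^sup>2)
      + (\<Sum>j<d1. (grad_v d1 d \<theta> x j - grad_v d1 d \<theta> x' j)\<^sup>2)
      \<le> (\<Sum>j<d1. (\<theta> (Inr j))\<^sup>2 * (\<delta>\<^sup>2 + flipf d j x x' \<theta>) / real d1) + (\<Sum>j<d1. (preact d \<theta> j ?u)\<^sup>2 / real d1)"
    by (intro add_mono sum_mono W V)
  also have "\<dots> = (\<Sum>j<d1. Yn d j x x' \<delta> \<theta>) / real d1"
    by (simp add: Yn_def sum_divide_distrib[symmetric] sum.distrib add_divide_distrib)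
  finally show ?thesis unfolding grad_diff_norm_def by (rule real_sqrt_le_mono)
qed

lemma Yn_meas:
  assumes "Blk d j \<subseteq> I"
  shows "Yn d j x x' \<delta> \<in> borel_measurable (PiM I (\<lambda>_. borel))"
proof -
  have W: "Wb d j \<subseteq> I" and R: "Inr j \<in> I" using assms by (auto simp: Blk_def)
  note [measurable] = flipf_meas[OF W] preact_meas[OF W] coord_meas[OF R]
  show ?thesis unfolding Yn_def[abs_def] by measurable
qed

lemma Yn_restrict: "Yn d j x x' \<delta> (restrict \<theta> (Blk d j)) = Yn d j x x' \<delta> \<theta>"
proof -
  have W: "Wb d j \<subseteq> Blk d j" and R: "Inr j \<in> Blk d j" by (auto simp: Blk_def)
  show ?thesis unfolding Yn_def using R by (simp add: flipf_restrict[OF W] preact_restrict[OF W])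
qed

lemma gdn_meas: "(\<lambda>\<theta>. grad_diff_norm d1 d \<theta> x x') \<in> borel_measurable (PiM (param_index d1 d) (\<lambda>_. borel))"
proof -
  have c1: "(\<lambda>\<theta>. \<theta> (Inl (j, k))) \<in> borel_measurable (PiM (param_index d1 d) (\<lambda>_. borel))" if "j < d1" "k < d" for j k
    by (rule coord_meas) (use that in \<open>auto simp: param_index_def\<close>)
  have c2: "(\<lambda>\<theta>. \<theta> (Inr j)) \<in> borel_measurable (PiM (param_index d1 d) (\<lambda>_. borel))" if "j < d1" for j
    by (rule coord_meas) (use that in \<open>auto simp: param_index_def\<close>)
  have p: "(\<lambda>\<theta>. preact d \<theta> j y) \<in> borel_measurable (PiM (param_index d1 d) (\<lambda>_. borel))" if "j < d1" for j y
    by (rule preact_meas[OF Wb_sub[OF that]])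
  show ?thesis
    unfolding grad_diff_norm_def grad_W_def grad_v_def
    by (intro measurable_compose[OF _ borel_measurable_sqrt] borel_measurable_add borel_measurable_sum borel_measurable_power
        borel_measurable_diff borel_measurable_times borel_measurable_const c1 c2
        measurable_compose[OF p relu_deriv_meas] measurable_compose[OF p relu_meas]) auto
qed

theorem lemma25:
  shows "\<exists>C C'. C > 0 \<and> C' > 0 \<and>
    (\<forall>d d1 :: nat. \<forall>x x' :: nat \<Rightarrow> real. \<forall>\<delta> \<epsilon> :: real.
       on_sphere d x \<and> on_sphere d x' \<and> 0 < \<delta> \<and> \<delta> \<le> 2 \<and>
       vnorm d (\<lambda>k. x k - x' k) \<le> \<delta> \<and> 0 < \<epsilon> \<and> \<epsilon> < 1 \<and>
       real d1 \<ge> C / \<delta> * ln (1 / \<epsilon>) \<longrightarrow>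
       measure (param_measure d1 d)
         {\<theta> \<in> space (param_measure d1 d). grad_diff_norm d1 d \<theta> x x' \<le> C' * sqrt \<delta>}
       \<ge> 1 - \<epsilon>)"
proof (rule exI[of _ "1::real"], rule exI[of _ "14::real"], intro conjI allI impI)
  fix d d1 :: nat and x x' :: "nat \<Rightarrow> real" and \<delta> \<epsilon> :: real
  assume H: "on_sphere d x \<and> on_sphere d x' \<and> 0 < \<delta> \<and> \<delta> \<le> 2 \<and>
       vnorm d (\<lambda>k. x k - x' k) \<le> \<delta> \<and> 0 < \<epsilon> \<and> \<epsilon> < 1 \<and> real d1 \<ge> 1 / \<delta> * ln (1 / \<epsilon>)"
  have x: "vnorm d x = 1" and x': "vnorm d x' = 1" using H by (auto simp: on_sphere_def)
  have d: "0 < \<delta>" "\<delta> \<le> 2" and nu: "vnorm d (\<lambda>k. x k - x' k) \<le> \<delta>"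
    and e: "0 < \<epsilon>" "\<epsilon> < 1" and hd1: "1 / \<delta> * ln (1 / \<epsilon>) \<le> real d1" using H by auto
  have lnpos: "0 < ln (1 / \<epsilon>)" using e by simp
  have d1\<delta>: "ln (1 / \<epsilon>) \<le> real d1 * \<delta>"
    using hd1 d by (simp add: field_simps)
  have d1pos: "0 < d1"
  proof (rule ccontr)
    assume "\<not> 0 < d1"
    then have "d1 = 0" by simp
    then show False using d1\<delta> lnpos by simp
  qed
  define I where "I = param_index d1 d"
  define M where "M = param_measure d1 d"
  have M: "M = gvec I (\<lambda>_. 0)" unfolding M_def I_def by (rule param_measure_gvec)
  have finI: "finite I" unfolding I_def by (rule finite_param_index)
  interpret prob_space M unfolding M by (rule prob_space_gvec)
  define c where "c = real d1 * (196 * \<delta>)"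
  define Z where "Z = (\<lambda>\<theta>. \<Sum>j<d1. Yn d j x x' \<delta> \<theta>)"
  have Ym: "Yn d j x x' \<delta> \<in> borel_measurable M" if "j < d1" for j
    unfolding M measurable_gvec_iff I_def by (rule Yn_meas[OF Blk_sub[OF that]])
  have Zm[measurable]: "Z \<in> borel_measurable M"
    unfolding Z_def by (intro borel_measurable_sum) (use Ym in \<open>auto simp: fun_eq_iff\<close>)
  have Gm[measurable]: "(\<lambda>\<theta>. grad_diff_norm d1 d \<theta> x x') \<in> borel_measurable M"
    unfolding M measurable_gvec_iff I_def by (rule gdn_meas)
  define Bad where "Bad = {\<theta> \<in> space M. c < Z \<theta>}"
  define Good where "Good = {\<theta> \<in> space M. grad_diff_norm d1 d \<theta> x x' \<le> 14 * sqrt \<delta>}"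
  have Bad_ev: "Bad \<in> events" unfolding Bad_def by measurable
  have Good_ev: "Good \<in> events" unfolding Good_def by measurable
  have sq: "sqrt (196 * \<delta>) = 14 * sqrt \<delta>"
  proof -
    have "sqrt (196::real) = 14" by (rule real_sqrt_unique) simp_all
    then show ?thesis by (simp add: real_sqrt_mult)
  qed
  have sub: "space M - Bad \<subseteq> Good"
  proof
    fix \<theta> assume t: "\<theta> \<in> space M - Bad"
    then have "Z \<theta> \<le> c" by (auto simp: Bad_def)
    then have "Z \<theta> / real d1 \<le> 196 * \<delta>" using d1pos by (simp add: c_def field_simps)
    then have "sqrt (Z \<theta> / real d1) \<le> 14 * sqrt \<delta>" using sq by (metis real_sqrt_le_mono)
    moreover have "grad_diff_norm d1 d \<theta> x x' \<le> sqrt (Z \<theta> / real d1)"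
      unfolding Z_def by (rule grad_bound[OF d1pos x x' nu])
    ultimately show "\<theta> \<in> Good" using t by (auto simp: Good_def)
  qed
  have blk: "(\<integral>\<^sup>+ \<theta>. (\<Prod>j\<in>{..<d1}. ennreal (exp (Yn d j x x' \<delta> (restrict \<theta> (Blk d j)) / 64))) \<partial>M)
      = (\<Prod>j\<in>{..<d1}. \<integral>\<^sup>+ \<theta>. ennreal (exp (Yn d j x x' \<delta> (restrict \<theta> (Blk d j)) / 64)) \<partial>M)"
    unfolding M
  proof (rule block_indep_gvec)
    show "I \<noteq> {}" using d1pos by (auto simp: I_def param_index_def)
    show "Blk d j \<subseteq> I" if "j \<in> {..<d1}" for j using that by (auto simp: I_def intro!: Blk_sub)
    show "disjoint_family_on (Blk d) {..<d1}"
      by (auto simp: disjoint_family_on_def Blk_def Wb_def)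
    show "(\<lambda>\<rho>. ennreal (exp (Yn d j x x' \<delta> \<rho> / 64))) \<in> borel_measurable (PiM (Blk d j) (\<lambda>_. borel))" for j
      using Yn_meas[of d j "Blk d j" x x' \<delta>] by measurable
  qed simp
  have pm: "(\<Prod>j\<in>{..<d1}. \<integral>\<^sup>+ \<theta>. ennreal (exp (Yn d j x x' \<delta> (restrict \<theta> (Blk d j)) / 64)) \<partial>M) \<le> (\<Prod>j\<in>{..<d1}. ennreal (exp (2 * \<delta>)))"
  proof (rule prod_mono_ennreal)
    fix j assume j: "j \<in> {..<d1}"
    have W: "Wb d j \<subseteq> I" and R: "Inr j \<in> I" using j Blk_sub[of j d1 d] by (auto simp: I_def Blk_def)
    show "(\<integral>\<^sup>+ \<theta>. ennreal (exp (Yn d j x x' \<delta> (restrict \<theta> (Blk d j)) / 64)) \<partial>M) \<le> ennreal (exp (2 * \<delta>))"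
      unfolding Yn_restrict M by (rule neuron_mgf[OF finI W R x d nu])
  qed
  have "emeasure M Bad = (\<integral>\<^sup>+ \<theta>. indicator Bad \<theta> \<partial>M)"
    using Bad_ev by simp
  also have "\<dots> \<le> (\<integral>\<^sup>+ \<theta>. ennreal (exp ((Z \<theta> - c) / 64)) \<partial>M)"
  proof (rule nn_integral_mono)
    fix \<theta> assume "\<theta> \<in> space M"
    show "indicator Bad \<theta> \<le> ennreal (exp ((Z \<theta> - c) / 64))"
    proof (cases "\<theta> \<in> Bad")
      case True
      then have "0 \<le> (Z \<theta> - c) / 64" by (auto simp: Bad_def)
      then have "1 \<le> exp ((Z \<theta> - c) / 64)" by simp
      then show ?thesis using True by (simp add: ennreal_leI)
    qed simp
  qed
  also have "\<dots> = (\<integral>\<^sup>+ \<theta>. ennreal (exp (- c / 64)) * (\<Prod>j\<in>{..<d1}. ennreal (exp (Yn d j x x' \<delta> (restrict \<theta> (Blk d j)) / 64))) \<partial>M)"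
  proof (rule nn_integral_cong)
    fix \<theta>
    have "exp ((Z \<theta> - c) / 64) = exp (- c / 64) * (\<Prod>j\<in>{..<d1}. exp (Yn d j x x' \<delta> \<theta> / 64))"
      unfolding Z_def by (simp add: exp_sum[symmetric] sum_divide_distrib[symmetric] exp_add[symmetric] diff_divide_distrib)
    then show "ennreal (exp ((Z \<theta> - c) / 64)) = ennreal (exp (- c / 64)) * (\<Prod>j\<in>{..<d1}. ennreal (exp (Yn d j x x' \<delta> (restrict \<theta> (Blk d j)) / 64)))"
      by (simp add: Yn_restrict prod_ennreal ennreal_mult'[symmetric] prod_nonneg)
  qed
  also have "\<dots> = ennreal (exp (- c / 64)) * (\<integral>\<^sup>+ \<theta>. (\<Prod>j\<in>{..<d1}. ennreal (exp (Yn d j x x' \<delta> (restrict \<theta> (Blk d j)) / 64))) \<partial>M)"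
  proof (rule nn_integral_cmult)
    have "(\<lambda>\<theta>. ennreal (exp (Yn d j x x' \<delta> (restrict \<theta> (Blk d j)) / 64))) \<in> borel_measurable M" if "j < d1" for j
      unfolding Yn_restrict using Ym[OF that] by measurable
    then show "(\<lambda>\<theta>. \<Prod>j\<in>{..<d1}. ennreal (exp (Yn d j x x' \<delta> (restrict \<theta> (Blk d j)) / 64))) \<in> borel_measurable M"
      by (intro borel_measurable_prod_ennreal) auto
  qed
  also have "\<dots> = ennreal (exp (- c / 64)) * (\<Prod>j\<in>{..<d1}. \<integral>\<^sup>+ \<theta>. ennreal (exp (Yn d j x x' \<delta> (restrict \<theta> (Blk d j)) / 64)) \<partial>M)"
    by (simp only: blk)
  also have "ennreal (exp (- c / 64)) * (\<Prod>j\<in>{..<d1}. \<integral>\<^sup>+ \<theta>. ennreal (exp (Yn d j x x' \<delta> (restrict \<theta> (Blk d j)) / 64)) \<partial>M) \<le> ennreal (exp (- c / 64)) * (\<Prod>j\<in>{..<d1}. ennreal (exp (2 * \<delta>)))"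
    by (rule mult_left_mono[OF pm]) simp
  also have "ennreal (exp (- c / 64)) * (\<Prod>j\<in>{..<d1}. ennreal (exp (2 * \<delta>))) = ennreal (exp (- c / 64 + real d1 * (2 * \<delta>)))"
  proof -
    have r: "exp (- c / 64 + real d1 * (2 * \<delta>)) = exp (- c / 64) * exp (2 * \<delta>) ^ d1"
      by (simp only: exp_add exp_of_nat_mult)
    show ?thesis
      by (simp only: prod_constant card_lessThan r ennreal_mult'[OF exp_ge_zero] ennreal_power[OF exp_ge_zero])
  qed
  also have "\<dots> \<le> ennreal \<epsilon>"
  proof (rule ennreal_leI)
    have "- c / 64 + real d1 * (2 * \<delta>) \<le> - (real d1 * \<delta>)"
      using d d1pos by (simp add: c_def field_simps)
    also have "\<dots> \<le> - ln (1 / \<epsilon>)" using d1\<delta> by simp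
    finally have "exp (- c / 64 + real d1 * (2 * \<delta>)) \<le> exp (- ln (1 / \<epsilon>))" by simp
    also have "\<dots> = \<epsilon>" using e by (simp add: ln_div)
    finally show "exp (- c / 64 + real d1 * (2 * \<delta>)) \<le> \<epsilon>" .
  qed
  finally have "emeasure M Bad \<le> ennreal \<epsilon>" .
  then have pB: "prob Bad \<le> \<epsilon>" using e by (simp add: emeasure_eq_measure ennreal_le_iff)
  have "1 - \<epsilon> \<le> prob (space M - Bad)" using prob_compl[OF Bad_ev] pB by simp
  also have "\<dots> \<le> prob Good" by (rule finite_measure_mono[OF sub Good_ev])
  finally show "1 - \<epsilon> \<le> measure (param_measure d1 d)
         {\<theta> \<in> space (param_measure d1 d). grad_diff_norm d1 d \<theta> x x' \<le> 14 * sqrt \<delta>}"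
    by (simp add: Good_def M_def)
qed simp_all

end
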